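(* Let $\Gamma$ be a distance-regular graph with diameter $3$, $n$ vertices and eigenvalues $k>\theta_1>\theta_2>\theta_3$, and let $m_1$ be the multiplicity of $\theta_1$. If $n\geq \frac{(m_1+2)(m_1+1)}{2}$, then $q^2_{11}=0$ or $q^3_{11}=0$, and hence $\Gamma$ is $Q$-polynomial with respect to $\theta_1$.
   Context: A connected graph $\Gamma$ of diameter $D$ is distance-regular if there are integers $b_i,c_i$ ($0\le i\le D$) such that for any two vertices $x,y$ at distance $i$, exactly $c_i$ neighbours of $y$ are at distance $i-1$ from $x$ and exactly $b_i$ neighbours of $y$ are at distance $i+1$ from $x$. Its eigenvalues (of the adjacency matrix) are $k=\theta_0>\theta_1>\dots>\theta_D$. Let $E_i$ be the orthogonal projection onto the eigenspace of $\theta_i$ (so $E_0=\frac1nJ$). The Krein parameters $q^h_{ij}$ are defined by $E_i\circ E_j=\frac1n\sum_{h=0}^D q^h_{ij}E_h$, where $\circ$ is the entrywise product. $\Gamma$ is $Q$-polynomial with respect to $\theta_1$ if there is an ordering $E_0,E_1,F_2,\dots,F_D$ of the primitive idempotents, beginning with $E_0$ and the projection $E_1$ for $\theta_1$, such that in this ordering the Krein parameter $q^{h}_{1j}$ vanishes whenever the positions $j,h$ satisfy $|j-h|>1$. *)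

theory Defs
  imports "HOL-Analysis.Analysis"
begin

definition simple_graph :: "('a \<Rightarrow> 'a \<Rightarrow> bool) \<Rightarrow> bool" where
  "simple_graph adj \<longleftrightarrow> (\<forall>x y. adj x y \<longrightarrow> adj y x) \<and> (\<forall>x. \<not> adj x x)"

definition walk_of_length :: "('a \<Rightarrow> 'a \<Rightarrow> bool) \<Rightarrow> nat \<Rightarrow> 'a \<Rightarrow> 'a \<Rightarrow> bool" where
  "walk_of_length adj d x y \<longleftrightarrow>
     (\<exists>p :: nat \<Rightarrow> 'a. p 0 = x \<and> p d = y \<and> (\<forall>i<d. adj (p i) (p (Suc i))))"

definition connected_graph :: "('a \<Rightarrow> 'a \<Rightarrow> bool) \<Rightarrow> bool" where
  "connected_graph adj \<longleftrightarrow> (\<forall>x y. \<exists>d. walk_of_length adj d x y)"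

definition gdist :: "('a \<Rightarrow> 'a \<Rightarrow> bool) \<Rightarrow> 'a \<Rightarrow> 'a \<Rightarrow> nat" where
  "gdist adj x y = (LEAST d. walk_of_length adj d x y)"

definition graph_diameter :: "('a::finite \<Rightarrow> 'a \<Rightarrow> bool) \<Rightarrow> nat" where
  "graph_diameter adj = Max {gdist adj x y | x y. True}"

definition distance_regular :: "('a::finite \<Rightarrow> 'a \<Rightarrow> bool) \<Rightarrow> bool" where
  "distance_regular adj \<longleftrightarrow> simple_graph adj \<and> connected_graph adj \<and>
     (\<exists>b c :: nat \<Rightarrow> nat. \<forall>x y. let i = gdist adj x y in
        (0 < i \<longrightarrow> card {z. adj y z \<and> gdist adj x z = i - 1} = c i) \<and>
        card {z. adj y z \<and> gdist adj x z = i + 1} = b i)"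

definition adj_matrix :: "('a::finite \<Rightarrow> 'a \<Rightarrow> bool) \<Rightarrow> real^'a^'a" where
  "adj_matrix adj = (\<chi> i j. if adj i j then 1 else 0)"

definition eigenspace :: "('a::finite \<Rightarrow> 'a \<Rightarrow> bool) \<Rightarrow> real \<Rightarrow> (real^'a) set" where
  "eigenspace adj \<theta> = {v. adj_matrix adj *v v = \<theta> *s v}"

definition graph_eigenvalues :: "('a::finite \<Rightarrow> 'a \<Rightarrow> bool) \<Rightarrow> real set" where
  "graph_eigenvalues adj = {\<theta>. \<exists>v. v \<noteq> 0 \<and> adj_matrix adj *v v = \<theta> *s v}"

text \<open>Multiplicity of an eigenvalue (dimension of its eigenspace; the adjacency matrix
  is symmetric so geometric and algebraic multiplicity agree).\<close>
definition eig_mult :: "('a::finite \<Rightarrow> 'a \<Rightarrow> bool) \<Rightarrow> real \<Rightarrow> nat" where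
  "eig_mult adj \<theta> = dim (eigenspace adj \<theta>)"

definition eig_proj :: "('a::finite \<Rightarrow> 'a \<Rightarrow> bool) \<Rightarrow> real \<Rightarrow> real^'a^'a" where
  "eig_proj adj \<theta> = (THE P. transpose P = P \<and> P ** P = P \<and>
                              range (\<lambda>x. P *v x) = eigenspace adj \<theta>)"

definition hadamard :: "real^'a^'a \<Rightarrow> real^'a^'a \<Rightarrow> real^'a^'a" where
  "hadamard M N = (\<chi> i j. M $ i $ j * N $ i $ j)"

text \<open>Krein parameters, indexed by eigenvalues: krein adj \<theta>i \<theta>j \<theta>h = q^h_{ij},
  defined by E_i \<circ> E_j = (1/n) \<Sum>_h q^h_{ij} E_h.\<close>
definition krein :: "('a::finite \<Rightarrow> 'a \<Rightarrow> bool) \<Rightarrow> real \<Rightarrow> real \<Rightarrow> real \<Rightarrow> real" where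
  "krein adj \<theta>i \<theta>j = (THE q. (\<forall>\<theta>. \<theta> \<notin> graph_eigenvalues adj \<longrightarrow> q \<theta> = 0) \<and>
      hadamard (eig_proj adj \<theta>i) (eig_proj adj \<theta>j) =
        (1 / real CARD('a)) *\<^sub>R (\<Sum>\<theta>\<in>graph_eigenvalues adj. q \<theta> *\<^sub>R eig_proj adj \<theta>))"

text \<open>Q-polynomial with respect to \<theta>: an ordering \<sigma> 0, ..., \<sigma> D of the eigenvalues
  (hence of the primitive idempotents) starting with the largest eigenvalue k
  (E_0 = J/n) and \<theta>, such that q^{\<sigma> h}_{\<sigma> 1, \<sigma> j} = 0 whenever |j - h| > 1.\<close>
definition Q_polynomial_wrt :: "('a::finite \<Rightarrow> 'a \<Rightarrow> bool) \<Rightarrow> real \<Rightarrow> bool" where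
  "Q_polynomial_wrt adj \<theta> \<longleftrightarrow>
     (\<exists>\<sigma> :: nat \<Rightarrow> real. bij_betw \<sigma> {0..graph_diameter adj} (graph_eigenvalues adj) \<and>
        \<sigma> 0 = Max (graph_eigenvalues adj) \<and> \<sigma> 1 = \<theta> \<and>
        (\<forall>j h. j \<le> graph_diameter adj \<longrightarrow> h \<le> graph_diameter adj \<longrightarrow> 1 < \<bar>int j - int h\<bar> \<longrightarrow>
            krein adj (\<sigma> 1) (\<sigma> j) (\<sigma> h) = 0))"

end

theory Submission
  imports Defs "HOL-Computational_Algebra.Polynomial"
begin

lemma walk0: "walk_of_length adj 0 x y \<longleftrightarrow> x = y"
  unfolding walk_of_length_def by auto

lemma walk_snoc: "walk_of_length adj d x y \<Longrightarrow> adj y z \<Longrightarrow> walk_of_length adj (Suc d) x z"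
  unfolding walk_of_length_def
proof (elim exE conjE)
  fix p assume p: "p 0 = x" "p d = y" "\<forall>i<d. adj (p i) (p (Suc i))" and a: "adj y z"
  show "\<exists>p. p 0 = x \<and> p (Suc d) = z \<and> (\<forall>i<Suc d. adj (p i) (p (Suc i)))"
    apply (rule exI[of _ "p(Suc d := z)"])
    using p a by (auto simp: less_Suc_eq)
qed

lemma walk_rev:
  assumes sym: "\<And>x y. adj x y \<Longrightarrow> adj y x" and w: "walk_of_length adj d x y"
  shows "walk_of_length adj d y x"
proof -
  from w obtain p where p: "p 0 = x" "p d = y" "\<forall>i<d. adj (p i) (p (Suc i))"
    unfolding walk_of_length_def by blast
  show ?thesis unfolding walk_of_length_def
  proof (rule exI[of _ "\<lambda>i. p (d - i)"], intro conjI allI impI)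
    fix i assume "i < d"
    then have "adj (p (d - Suc i)) (p (Suc (d - Suc i)))" using p by auto
    moreover have "Suc (d - Suc i) = d - i" using \<open>i<d\<close> by auto
    ultimately show "adj (p (d - i)) (p (d - Suc i))" using sym by auto
  qed (use p in auto)
qed

locale drg =
  fixes adj :: "'a::finite \<Rightarrow> 'a \<Rightarrow> bool"
  assumes DR: "distance_regular adj"
begin

lemma sg: "simple_graph adj" using DR unfolding distance_regular_def by auto
lemma adj_sym: "adj x y \<Longrightarrow> adj y x" using sg unfolding simple_graph_def by auto
lemma adj_irrefl: "\<not> adj x x" using sg unfolding simple_graph_def by auto
lemma conn: "\<exists>d. walk_of_length adj d x y" using DR unfolding distance_regular_def connected_graph_def by auto

lemma gdist_walk: "walk_of_length adj (gdist adj x y) x y"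
  unfolding gdist_def using conn by (rule LeastI_ex)

lemma gdist_le: "walk_of_length adj d x y \<Longrightarrow> gdist adj x y \<le> d"
  unfolding gdist_def by (rule Least_le)

lemma gdist_sym: "gdist adj x y = gdist adj y x"
  using gdist_le[OF walk_rev[OF adj_sym gdist_walk]] by (metis le_antisym)

lemma gdist_0_iff: "gdist adj x y = 0 \<longleftrightarrow> x = y"
  using gdist_walk[of x y] gdist_le[of 0 x y] walk0 by fastforce

lemma gdist_refl[simp]: "gdist adj x x = 0" using gdist_0_iff by simp

lemma adj_gdist: "adj x z \<longleftrightarrow> gdist adj x z = 1"
proof
  assume a: "adj x z"
  have "walk_of_length adj 0 x x" using walk0 by metis
  from walk_snoc[OF this a] have "walk_of_length adj 1 x z" by simp
  then have "gdist adj x z \<le> 1" by (rule gdist_le)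
  moreover have "x \<noteq> z" using a adj_irrefl by auto
  ultimately show "gdist adj x z = 1" using gdist_0_iff[of x z] by linarith
next
  assume "gdist adj x z = 1"
  then have "walk_of_length adj 1 x z" using gdist_walk[of x z] by simp
  then show "adj x z" unfolding walk_of_length_def by auto
qed

lemma gdist_tri: "adj y z \<Longrightarrow> gdist adj x z \<le> gdist adj x y + 1"
  using gdist_le[OF walk_snoc[OF gdist_walk]] by simp

lemma gdist_adj_diff:
  assumes "adj y z"
  shows "gdist adj x z \<le> gdist adj x y + 1" "gdist adj x y \<le> gdist adj x z + 1"
  using gdist_tri[OF assms] gdist_tri[OF adj_sym[OF assms]] by auto

definition bb :: "nat \<Rightarrow> nat" where
  "bb = (SOME b. \<exists>c. \<forall>x y. let i = gdist adj x y in
        (0 < i \<longrightarrow> card {z. adj y z \<and> gdist adj x z = i - 1} = c i) \<and>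
        card {z. adj y z \<and> gdist adj x z = i + 1} = b i)"
definition cc :: "nat \<Rightarrow> nat" where
  "cc = (SOME c. \<forall>x y. let i = gdist adj x y in
        (0 < i \<longrightarrow> card {z. adj y z \<and> gdist adj x z = i - 1} = c i) \<and>
        card {z. adj y z \<and> gdist adj x z = i + 1} = bb i)"

lemma bc: "\<And>x y. (0 < gdist adj x y \<longrightarrow> card {z. adj y z \<and> gdist adj x z = gdist adj x y - 1} = cc (gdist adj x y)) \<and>
        card {z. adj y z \<and> gdist adj x z = gdist adj x y + 1} = bb (gdist adj x y)"
proof -
  have "\<exists>b c. \<forall>x y. let i = gdist adj x y in
        (0 < i \<longrightarrow> card {z. adj y z \<and> gdist adj x z = i - 1} = c i) \<and>
        card {z. adj y z \<and> gdist adj x z = i + 1} = b i"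
    using DR unfolding distance_regular_def by auto
  then have "\<exists>c. \<forall>x y. let i = gdist adj x y in
        (0 < i \<longrightarrow> card {z. adj y z \<and> gdist adj x z = i - 1} = c i) \<and>
        card {z. adj y z \<and> gdist adj x z = i + 1} = bb i"
    unfolding bb_def by (rule someI_ex)
  then have "\<forall>x y. let i = gdist adj x y in
        (0 < i \<longrightarrow> card {z. adj y z \<and> gdist adj x z = i - 1} = cc i) \<and>
        card {z. adj y z \<and> gdist adj x z = i + 1} = bb i"
    unfolding cc_def by (rule someI_ex)
  then show "\<And>x y. ?thesis x y" by (auto simp: Let_def)
qed

lemma degree: "card {z. adj y z} = bb 0"
proof -
  have "{z. adj y z \<and> gdist adj y z = 0 + 1} = {z. adj y z}" using adj_gdist by auto
  then show ?thesis using bc[of y y] by simp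
qed

definition FF :: "nat \<Rightarrow> nat \<Rightarrow> nat" where
  "FF i j = (if j = Suc i then bb i else if 0 < i \<and> Suc j = i then cc i
     else if j = i \<and> 0 < i then bb 0 - bb i - cc i else 0)"

lemma count_nb: "card {z. adj y z \<and> gdist adj x z = j} = FF (gdist adj x y) j"
proof -
  let ?i = "gdist adj x y"
  let ?S = "\<lambda>j. {z. adj y z \<and> gdist adj x z = j}"
  have fin: "finite (?S j)" for j by simp
  have near: "z \<in> ?S j \<Longrightarrow> j \<le> ?i + 1 \<and> ?i \<le> j + 1" for z j
    using gdist_adj_diff[of y z x] by auto
  show ?thesis
  proof (cases "j = Suc ?i")
    case True then show ?thesis using bc[of x y] by (simp add: FF_def)
  next
    case ns: False
    show ?thesis
    proof (cases "0 < ?i \<and> Suc j = ?i")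
      case True
      then have "j = ?i - 1" by auto
      then show ?thesis using bc[of x y] ns True by (auto simp: FF_def)
    next
      case nc: False
      show ?thesis
      proof (cases "j = ?i \<and> 0 < ?i")
        case True
        have "{z. adj y z} = ?S (?i - 1) \<union> ?S ?i \<union> ?S (?i + 1)"
          using near by force
        then have "card {z. adj y z} = card (?S (?i - 1)) + card (?S ?i) + card (?S (?i + 1))"
        proof -
          have d1: "?S (?i - 1) \<inter> ?S ?i = {}" "(?S (?i - 1) \<union> ?S ?i) \<inter> ?S (?i + 1) = {}"
            using True by auto
          show ?thesis unfolding \<open>{z. adj y z} = _\<close>
            by (subst card_Un_disjoint, simp, simp, fact, subst card_Un_disjoint, simp, simp, fact, simp)
        qed
        then have "bb 0 = cc ?i + card (?S ?i) + bb ?i" using bc[of x y] True degree by simp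
        then show ?thesis using True ns nc by (simp add: FF_def)
      next
        case False
        have "?S j = {}"
        proof (rule ccontr)
          assume "?S j \<noteq> {}"
          then obtain z where z: "z \<in> ?S j" by blast
          from near[OF z] ns nc False have "j = 0 \<and> ?i = 0" by auto
          then have "x = y" "gdist adj x z = 0" using z gdist_0_iff by auto
          then show False using z adj_irrefl gdist_0_iff by auto
        qed
        moreover have "FF ?i j = 0" using ns nc False unfolding FF_def by auto
        ultimately show ?thesis by simp
      qed
    qed
  qed
qed

end


lemma matrix_add_rdistrib': "((B + C) ** A) = (B ** A) + (C ** A)"
  by (simp add: matrix_matrix_mult_def vec_eq_iff sum.distrib algebra_simps)

lemma matrix_diff_rdistrib': "((B - C) ** A) = (B ** A) - (C ** (A::real^'n^'m))"
  by (simp add: matrix_matrix_mult_def vec_eq_iff sum_subtractf left_diff_distrib right_diff_distrib)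

lemma matrix_diff_ldistrib': "(A ** (B - C)) = (A ** B) - (A ** (C::real^'n^'m))"
  by (simp add: matrix_matrix_mult_def vec_eq_iff sum_subtractf left_diff_distrib right_diff_distrib)

lemma scaleR_mat1_mult[simp]: "((a::real) *\<^sub>R mat 1) ** (N::real^'n^'m) = a *\<^sub>R N"
  by (metis matrix_mul_lid scalar_matrix_assoc)

lemma mult_scaleR_mat1[simp]: "(N::real^'n^'m) ** ((a::real) *\<^sub>R mat 1) = a *\<^sub>R N"
  by (metis matrix_mul_rid matrix_scalar_ac)

lemma scaleR_mat_vec[simp]: "((a::real) *\<^sub>R (M::real^'n^'m)) *v v = a *\<^sub>R (M *v v)"
  by (simp add: matrix_vector_mult_def vec_eq_iff sum_distrib_left algebra_simps)

definition mpoly :: "real^'n^'n \<Rightarrow> real poly \<Rightarrow> real^'n^'n" where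
  "mpoly M p = fold_coeffs (\<lambda>a N. a *\<^sub>R mat 1 + M ** N) p 0"

lemma mpoly_0[simp]: "mpoly M 0 = 0" by (simp add: mpoly_def)

lemma mpoly_pCons[simp]: "mpoly M (pCons a p) = a *\<^sub>R mat 1 + M ** mpoly M p"
proof (cases "p = 0")
  case True
  then show ?thesis
    by (cases "a = 0") (simp_all add: mpoly_def)
next
  case False
  then show ?thesis by (simp add: mpoly_def)
qed

lemma mpoly_add[simp]: "mpoly M (p + q) = mpoly M p + mpoly M q"
proof (induction p arbitrary: q rule: pCons_induct)
  case 0 then show ?case by simp
next
  case (pCons a p)
  obtain b q' where q: "q = pCons b q'" by (cases q) auto
  have "mpoly M (p + q') = mpoly M p + mpoly M q'" using pCons(2)[of q'] by (simp add: add.commute)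
  then show ?case by (simp add: q matrix_add_ldistrib algebra_simps)
qed

lemma mpoly_smult[simp]: "mpoly M (smult c p) = c *\<^sub>R mpoly M p"
  by (induction p rule: pCons_induct) (simp_all add: matrix_scalar_ac scalar_matrix_assoc[symmetric] scaleR_add_right)

lemma mpoly_minus[simp]: "mpoly M (- p) = - mpoly M p"
  using mpoly_smult[of M "-1" p] by simp

lemma mpoly_diff[simp]: "mpoly M (p - q) = mpoly M p - mpoly M q"
  using mpoly_add[of M p "-q"] by simp

lemma mpoly_mult[simp]: "mpoly M (p * q) = mpoly M p ** mpoly M q"
proof (induction p rule: pCons_induct)
  case 0 then show ?case by simp
next
  case (pCons a p)
  have "mpoly M (pCons a p * q) = a *\<^sub>R mpoly M q + M ** (mpoly M p ** mpoly M q)"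
    by (simp add: mult_pCons_left pCons)
  also have "\<dots> = (a *\<^sub>R mat 1 + M ** mpoly M p) ** mpoly M q"
    by (simp add: matrix_add_rdistrib' matrix_mul_assoc)
  finally show ?case by simp
qed

lemma mpoly_const[simp]: "mpoly M [:c:] = c *\<^sub>R mat 1" by simp

lemma mpoly_1[simp]: "mpoly M 1 = mat 1" by (simp add: one_pCons)

lemma mpoly_lin: "mpoly M [:a, 1:] = a *\<^sub>R mat 1 + M" by simp

lemma mpoly_comm: "mpoly M p ** mpoly M q = mpoly M q ** mpoly M p"
  by (metis mpoly_mult mult.commute)

lemma mpoly_sum: "finite S \<Longrightarrow> mpoly M (\<Sum>i\<in>S. f i) = (\<Sum>i\<in>S. mpoly M (f i))"
  by (induction S rule: finite_induct) auto

lemma mpoly_eig: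
  assumes "M *v v = t *\<^sub>R v"
  shows "mpoly M p *v v = poly p t *\<^sub>R v"
proof (induction p rule: pCons_induct)
  case 0 then show ?case by simp
next
  case (pCons a p)
  have "mpoly M (pCons a p) *v v = a *\<^sub>R v + M *v (mpoly M p *v v)"
    by (simp add: matrix_vector_mult_add_rdistrib matrix_vector_mul_assoc[symmetric]
        matrix_vector_mult_scaleR scaleR_matrix_vector_assoc)
  also have "\<dots> = poly (pCons a p) t *\<^sub>R v"
    using pCons assms by (simp add: matrix_vector_mult_scaleR algebra_simps)
  finally show ?case .
qed

lemma mpoly_transpose:
  assumes "transpose M = M"
  shows "transpose (mpoly M p) = mpoly M p"
proof (induction p rule: pCons_induct)
  case 0 then show ?case by (simp add: transpose_def vec_eq_iff)
next
  case (pCons a p)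
  have tadd: "transpose (X + Y) = transpose X + transpose Y" for X Y :: "real^'n^'n"
    by (simp add: transpose_def vec_eq_iff)
  show ?case using pCons assms
    by (simp add: tadd transpose_scalar matrix_transpose_mul mpoly_comm[of M p "[:0,1:]", simplified])
qed


lemma sum_group_le3:
  fixes d :: "'b \<Rightarrow> nat" and g :: "nat \<Rightarrow> real"
  assumes "finite N" "\<And>z. z \<in> N \<Longrightarrow> d z \<le> 3"
  shows "(\<Sum>z\<in>N. g (d z)) = (\<Sum>j\<le>3. g j * real (card {z\<in>N. d z = j}))"
proof -
  have "(\<Sum>z\<in>N. g (d z)) = (\<Sum>j\<le>3. \<Sum>z\<in>{z\<in>N. d z = j}. g (d z))"
    by (rule sum.group[symmetric]) (use assms in auto)
  also have "\<dots> = (\<Sum>j\<le>3. g j * real (card {z\<in>N. d z = j}))"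
    by (intro sum.cong refl) auto
  finally show ?thesis .
qed

locale drg3 = drg adj for adj :: "'a::finite \<Rightarrow> 'a \<Rightarrow> bool" +
  assumes diam: "graph_diameter adj = 3"
begin

lemma gdist_le3: "gdist adj x y \<le> 3"
proof -
  have "finite {gdist adj x y |x y. True}"
  proof -
    have "{gdist adj x y |x y. True} = (\<lambda>(x,y). gdist adj x y) ` UNIV" by auto
    then show ?thesis by simp
  qed
  then have "gdist adj x y \<le> Max {gdist adj x y |x y. True}" by (rule Max_ge) auto
  then show ?thesis using diam unfolding graph_diameter_def by simp
qed

abbreviation AM where "AM \<equiv> adj_matrix adj"

definition Bf :: "(nat \<Rightarrow> real) \<Rightarrow> real^'a^'a" where
  "Bf g = (\<chi> x y. g (gdist adj x y))"

definition BM where "BM = range Bf"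

lemma Bf_add: "Bf f + Bf g = Bf (\<lambda>i. f i + g i)" by (simp add: Bf_def vec_eq_iff)
lemma Bf_scale: "c *\<^sub>R Bf f = Bf (\<lambda>i. c * f i)" by (simp add: Bf_def vec_eq_iff)
lemma Bf_zero: "0 = Bf (\<lambda>i. 0)" by (simp add: Bf_def vec_eq_iff)

lemma subspace_BM: "subspace BM"
  unfolding subspace_def BM_def
  by (auto simp: Bf_add Bf_scale intro: exI[of _ "\<lambda>i. 0"] Bf_zero)

lemma mat1_Bf: "mat 1 = Bf (\<lambda>i. if i = 0 then 1 else 0)"
  by (auto simp: Bf_def mat_def vec_eq_iff gdist_0_iff)

lemma AM_Bf: "AM = Bf (\<lambda>i. if i = 1 then 1 else 0)"
  by (auto simp: Bf_def adj_matrix_def vec_eq_iff adj_gdist)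

lemma AM_sym: "transpose AM = AM"
  by (auto simp: transpose_def adj_matrix_def vec_eq_iff intro: adj_sym)

lemma AM_mult_Bf: "AM ** Bf g = Bf (\<lambda>i. \<Sum>j\<le>3. g j * real (FF i j))"
proof -
  have "(AM ** Bf g) $ x $ y = (\<Sum>j\<le>3. g j * real (FF (gdist adj x y) j))" for x y
  proof -
    have "(AM ** Bf g) $ x $ y = (\<Sum>z\<in>UNIV. (if adj x z then 1 else 0) * g (gdist adj z y))"
      by (simp add: matrix_matrix_mult_def adj_matrix_def Bf_def)
    also have "\<dots> = (\<Sum>z\<in>{z. adj x z}. g (gdist adj y z))"
    proof -
      have "(\<Sum>z\<in>UNIV. (if adj x z then 1 else 0) * g (gdist adj z y)) = (\<Sum>z\<in>UNIV. if adj x z then g (gdist adj z y) else 0)"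
        by (intro sum.cong) auto
      also have "\<dots> = (\<Sum>z\<in>{z. adj x z}. g (gdist adj z y))" by (simp add: sum.If_cases)
      finally show ?thesis by (simp add: gdist_sym)
    qed
    also have "\<dots> = (\<Sum>j\<le>3. g j * real (card {z\<in>{z. adj x z}. gdist adj y z = j}))"
      by (rule sum_group_le3) (auto simp: gdist_le3)
    also have "\<dots> = (\<Sum>j\<le>3. g j * real (FF (gdist adj x y) j))"
      using count_nb[of x y] by (simp add: gdist_sym)
    finally show ?thesis .
  qed
  then show ?thesis by (simp add: Bf_def vec_eq_iff)
qed

lemma AM_mult_BM: "M \<in> BM \<Longrightarrow> AM ** M \<in> BM"
  unfolding BM_def using AM_mult_Bf by auto

lemma mpoly_BM: "mpoly AM p \<in> BM"
proof (induction p rule: pCons_induct)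
  case 0 then show ?case using subspace_BM by (simp add: subspace_0)
next
  case (pCons a p)
  have "a *\<^sub>R mat 1 \<in> BM" using subspace_BM by (simp add: subspace_scale mat1_Bf BM_def)
  moreover have "AM ** mpoly AM p \<in> BM" using AM_mult_BM pCons by simp
  ultimately show ?case using subspace_BM by (simp add: subspace_add)
qed

lemma hadamard_Bf: "hadamard (Bf f) (Bf g) = Bf (\<lambda>i. f i * g i)"
  by (simp add: hadamard_def Bf_def)

lemma hadamard_BM: "M \<in> BM \<Longrightarrow> N \<in> BM \<Longrightarrow> hadamard M N \<in> BM"
  unfolding BM_def using hadamard_Bf by auto

definition Dm :: "nat \<Rightarrow> real^'a^'a" where "Dm j = Bf (\<lambda>i. if i = j then 1 else 0)"

lemma Bf_span: "Bf g = (\<Sum>j\<le>3. g j *\<^sub>R Dm j)"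
proof -
  have "(\<Sum>j\<le>(3::nat). g j * (if gdist adj x y = j then 1 else 0)) = g (gdist adj x y)" for x y
  proof -
    have "(\<Sum>j\<le>(3::nat). g j * (if gdist adj x y = j then 1 else 0)) = (\<Sum>j\<in>{..3}. if j = gdist adj x y then g j else 0)"
      by (intro sum.cong) auto
    also have "\<dots> = g (gdist adj x y)" using gdist_le3[of x y] by (simp add: sum.delta')
    finally show ?thesis .
  qed
  then show ?thesis by (simp add: Dm_def Bf_def vec_eq_iff)
qed

lemma BM_span: "BM \<subseteq> span (Dm ` {..3})"
proof
  fix M assume "M \<in> BM"
  then obtain g where M: "M = Bf g" unfolding BM_def by auto
  show "M \<in> span (Dm ` {..3})" unfolding M Bf_span
    by (intro span_sum span_scale span_base) auto
qed

lemma dim_BM: "dim BM \<le> 4"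
proof -
  have "dim BM \<le> card (Dm ` {..3})" by (rule dim_le_card[OF BM_span]) auto
  also have "\<dots> \<le> card {..3::nat}" by (rule card_image_le) auto
  finally show ?thesis by simp
qed

end


lemma dep_family:
  fixes f :: "nat \<Rightarrow> 'v::real_vector"
  assumes fT: "\<And>i. i \<le> n \<Longrightarrow> f i \<in> span T" and T: "finite T" "card T \<le> n"
  shows "\<exists>u. (\<exists>i\<le>n. u i \<noteq> 0) \<and> (\<Sum>i\<le>n. u i *\<^sub>R f i) = 0"
proof (cases "inj_on f {..n}")
  case True
  let ?S = "f ` {..n}"
  have cS: "card ?S = Suc n" using True by (simp add: card_image)
  have "\<not> independent ?S"
  proof
    assume "independent ?S"
    then have "card ?S \<le> card T" using independent_span_bound[OF T(1)] fT by auto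
    then show False using cS T by simp
  qed
  then obtain w where w: "\<exists>v\<in>?S. w v \<noteq> 0" "(\<Sum>v\<in>?S. w v *\<^sub>R v) = 0"
    using dependent_finite[of ?S] by auto
  show ?thesis
  proof (intro exI[of _ "\<lambda>i. w (f i)"] conjI)
    show "\<exists>i\<le>n. w (f i) \<noteq> 0" using w(1) by auto
    show "(\<Sum>i\<le>n. w (f i) *\<^sub>R f i) = 0" using w(2) sum.reindex[OF True, of "\<lambda>v. w v *\<^sub>R v"] by simp
  qed
next
  case False
  then obtain i j where ij: "i \<le> n" "j \<le> n" "i \<noteq> j" "f i = f j" unfolding inj_on_def by auto
  let ?u = "\<lambda>l. if l = i then 1 else if l = j then -1 else (0::real)"
  have "(\<Sum>l\<le>n. ?u l *\<^sub>R f l) = (\<Sum>l\<le>n. (if l = i then f i else 0) - (if l = j then f j else 0))"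
    by (intro sum.cong) (use ij in auto)
  also have "\<dots> = 0" using ij by (simp add: sum_subtractf)
  finally show ?thesis using ij by (intro exI[of _ ?u]) auto
qed

lemma proj_unique:
  fixes P Q :: "real^'n^'n"
  assumes "transpose P = P" "P ** P = P" "transpose Q = Q" "Q ** Q = Q"
    and R: "range (\<lambda>x. P *v x) = range (\<lambda>x. Q *v x)"
  shows "P = Q"
proof -
  have PQ: "X ** Y = Y" if h1: "X ** X = X" and h2: "range (\<lambda>x. Y *v x) \<subseteq> range (\<lambda>x. X *v x)" for X Y :: "real^'n^'n"
  proof (rule matrix_eq[THEN iffD2], rule allI)
    fix x
    obtain y where "Y *v x = X *v y" using h2 by auto
    then show "(X ** Y) *v x = Y *v x"
      by (metis matrix_vector_mul_assoc h1)
  qed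
  have 1: "P ** Q = Q" using PQ[of P Q] assms by auto
  have 2: "Q ** P = P" using PQ[of Q P] assms by auto
  have "P = transpose (Q ** P)" using 2 assms by simp
  also have "\<dots> = P ** Q" using assms by (simp add: matrix_transpose_mul)
  finally show ?thesis using 1 by simp
qed

locale drgE = drg3 adj for adj :: "'a::finite \<Rightarrow> 'a \<Rightarrow> bool" +
  fixes k t1 t2 t3 :: real
  assumes EV: "graph_eigenvalues adj = {k, t1, t2, t3}"
    and o1: "k > t1" and o2: "t1 > t2" and o3: "t2 > t3"
begin

abbreviation EVs where "EVs \<equiv> graph_eigenvalues adj"

lemma fin_EV[simp]: "finite EVs" using EV by simp
lemma card_EV: "card EVs = 4"
proof -
  have "k \<notin> {t1, t2, t3}" "t1 \<notin> {t2, t3}" "t2 \<notin> {t3}" using o1 o2 o3 by auto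
  then show ?thesis using EV by simp
qed

lemma eigvec: "\<theta> \<in> EVs \<Longrightarrow> \<exists>v. v \<noteq> 0 \<and> AM *v v = \<theta> *\<^sub>R v"
  unfolding graph_eigenvalues_def by (auto simp: scalar_mult_eq_scaleR)

definition mpw :: "nat \<Rightarrow> real^'a^'a" where "mpw m = mpoly AM (monom 1 m)"

lemma mpoly_monom: "mpoly M (monom c m) = c *\<^sub>R mpoly M (monom 1 m)"
  by (metis mpoly_smult mult.right_neutral smult_monom)

lemma ex_annih: "\<exists>g. g \<noteq> 0 \<and> degree g \<le> 4 \<and> mpoly AM g = 0"
proof -
  have "\<exists>u. (\<exists>i\<le>4. u i \<noteq> 0) \<and> (\<Sum>i\<le>4. u i *\<^sub>R mpw i) = 0"
  proof (rule dep_family)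
    show "mpw i \<in> span (Dm ` {..3})" for i using BM_span mpoly_BM unfolding mpw_def by auto
    show "card (Dm ` {..3}) \<le> 4"
      using card_image_le[of "{..3::nat}" Dm] by simp
  qed auto
  then obtain u where u: "\<exists>i\<le>4. u i \<noteq> 0" "(\<Sum>i\<le>4. u i *\<^sub>R mpw i) = 0" by blast
  define g where "g = (\<Sum>i\<le>4. monom (u i) i)"
  have cg: "coeff g i = (if i \<le> 4 then u i else 0)" for i
    by (simp add: g_def coeff_sum coeff_monom)
  have "g \<noteq> 0"
  proof
    assume "g = 0"
    then show False using u(1) cg by (metis coeff_0)
  qed
  moreover have "degree g \<le> 4" by (rule degree_le) (auto simp: cg)
  moreover have "mpoly AM g = 0"
  proof -
    have "mpoly AM (monom (u i) i) = u i *\<^sub>R mpw i" for i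
      unfolding mpw_def by (rule mpoly_monom)
    then show ?thesis using u(2) by (simp add: g_def mpoly_sum)
  qed
  ultimately show ?thesis by blast
qed

lemma root_annih: "mpoly AM g = 0 \<Longrightarrow> \<theta> \<in> EVs \<Longrightarrow> poly g \<theta> = 0"
  using eigvec[of \<theta>] mpoly_eig[of AM _ \<theta> g] by auto

definition PP :: "real poly" where "PP = (\<Prod>\<eta>\<in>EVs. [:-\<eta>, 1:])"

lemma degree_linprod: "finite S \<Longrightarrow> degree (\<Prod>\<eta>\<in>S. [:-\<eta>, 1::real:]) = card S"
  by (subst degree_prod_sum_eq) auto

lemma lead_linprod: "lead_coeff (\<Prod>\<eta>\<in>S. [:-\<eta>, 1::real:]) = 1"
  by (simp add: lead_coeff_prod)

lemma mpoly_PP: "mpoly AM PP = 0"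
proof -
  obtain g where g: "g \<noteq> 0" "degree g \<le> 4" "mpoly AM g = 0" using ex_annih by blast
  let ?c = "coeff g 4"
  have dPP: "degree PP = 4" using card_EV by (simp add: PP_def degree_linprod)
  have cPP: "coeff PP 4 = 1" using lead_linprod[of EVs] dPP by (simp add: PP_def)
  have "g = smult ?c PP"
  proof (rule poly_eqI_degree_lead_coeff[of g 4 "smult ?c PP" EVs])
    show "coeff g 4 = coeff (smult ?c PP) 4" using cPP by simp
    show "4 \<le> card EVs" using card_EV by simp
    show "degree g \<le> 4" by fact
    show "degree (smult ?c PP) \<le> 4" using dPP degree_smult_le[of ?c PP] by simp
    show "poly g z = poly (smult ?c PP) z" if "z \<in> EVs" for z
      using root_annih[OF g(3) that] that by (simp add: PP_def poly_prod)
  qed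
  then have "?c \<noteq> 0" using g(1) by auto
  moreover have "?c *\<^sub>R mpoly AM PP = 0" using g(3) \<open>g = _\<close> by (metis mpoly_smult)
  ultimately show ?thesis by simp
qed

end


context drgE begin

definition Lg :: "real \<Rightarrow> real poly" where
  "Lg \<theta> = smult (1 / (\<Prod>\<eta>\<in>EVs-{\<theta>}. (\<theta> - \<eta>))) (\<Prod>\<eta>\<in>EVs-{\<theta>}. [:-\<eta>, 1:])"

definition EE :: "real \<Rightarrow> real^'a^'a" where "EE \<theta> = mpoly AM (Lg \<theta>)"

lemma den_nz: "(\<Prod>\<eta>\<in>EVs-{\<theta>}. (\<theta> - \<eta>)) \<noteq> 0"
  by (simp add: prod_zero_iff)

lemma poly_Lg: "\<eta> \<in> EVs \<Longrightarrow> poly (Lg \<theta>) \<eta> = (if \<eta> = \<theta> then 1 else 0)"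
proof (cases "\<eta> = \<theta>")
  case True
  then show ?thesis using den_nz[of \<theta>] by (simp add: Lg_def poly_prod)
next
  case False
  assume "\<eta> \<in> EVs"
  then have "(\<Prod>\<zeta>\<in>EVs-{\<theta>}. \<eta> - \<zeta>) = 0" using False by (simp add: prod_zero_iff)
  then show ?thesis using False by (simp add: Lg_def poly_prod)
qed

lemma deg_Lg: "\<theta> \<in> EVs \<Longrightarrow> degree (Lg \<theta>) \<le> 3"
proof -
  assume "\<theta> \<in> EVs"
  then have "card (EVs - {\<theta>}) = 3" using card_EV by simp
  then have "degree (\<Prod>\<eta>\<in>EVs-{\<theta>}. [:-\<eta>, 1::real:]) = 3" by (simp add: degree_linprod)
  then show ?thesis unfolding Lg_def by (metis degree_smult_le)
qed

lemma sum_Lg: "(\<Sum>\<theta>\<in>EVs. Lg \<theta>) = 1"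
proof (rule poly_eqI_degree[of EVs])
  fix x assume x: "x \<in> EVs"
  have "poly (\<Sum>\<theta>\<in>EVs. Lg \<theta>) x = (\<Sum>\<theta>\<in>EVs. if x = \<theta> then 1 else 0)"
    by (simp add: poly_sum poly_Lg[OF x])
  also have "\<dots> = 1" using x by simp
  finally show "poly (\<Sum>\<theta>\<in>EVs. Lg \<theta>) x = poly 1 x" by simp
next
  have "degree (\<Sum>\<theta>\<in>EVs. Lg \<theta>) \<le> 3" by (rule degree_sum_le) (auto simp: deg_Lg)
  then show "degree (\<Sum>\<theta>\<in>EVs. Lg \<theta>) < card EVs" using card_EV by simp
qed (use card_EV in simp)

lemma lin_Lg: "\<theta> \<in> EVs \<Longrightarrow> [:-\<theta>, 1:] * Lg \<theta> = smult (1 / (\<Prod>\<eta>\<in>EVs-{\<theta>}. (\<theta> - \<eta>))) PP"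
  unfolding Lg_def PP_def by (simp add: prod.remove[of EVs \<theta>] mult_smult_right)

lemma AM_EE: "\<theta> \<in> EVs \<Longrightarrow> AM ** EE \<theta> = \<theta> *\<^sub>R EE \<theta>"
proof -
  assume t: "\<theta> \<in> EVs"
  have "mpoly AM ([:-\<theta>, 1:] * Lg \<theta>) = 0" using lin_Lg[OF t] mpoly_PP by simp
  then have "(-\<theta>) *\<^sub>R EE \<theta> + AM ** EE \<theta> = 0"
    by (simp add: EE_def matrix_add_rdistrib')
  then show ?thesis by (simp add: algebra_simps add_eq_0_iff)
qed

lemma EE_eig: "\<theta> \<in> EVs \<Longrightarrow> \<eta> \<in> EVs \<Longrightarrow> AM *v v = \<eta> *\<^sub>R v \<Longrightarrow> EE \<theta> *v v = (if \<eta> = \<theta> then v else 0)"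
  unfolding EE_def using mpoly_eig[of AM v \<eta> "Lg \<theta>"] poly_Lg[of \<eta> \<theta>] by auto

lemma EE_col: "\<theta> \<in> EVs \<Longrightarrow> AM *v (EE \<theta> *v w) = \<theta> *\<^sub>R (EE \<theta> *v w)"
  by (simp add: matrix_vector_mul_assoc AM_EE)

lemma EE_mult: "\<theta> \<in> EVs \<Longrightarrow> \<eta> \<in> EVs \<Longrightarrow> EE \<theta> ** EE \<eta> = (if \<theta> = \<eta> then EE \<theta> else 0)"
proof (rule matrix_eq[THEN iffD2], rule allI)
  fix w assume t: "\<theta> \<in> EVs" "\<eta> \<in> EVs"
  have "(EE \<theta> ** EE \<eta>) *v w = EE \<theta> *v (EE \<eta> *v w)" by (simp add: matrix_vector_mul_assoc)
  also have "\<dots> = (if \<eta> = \<theta> then EE \<eta> *v w else 0)" by (rule EE_eig[OF t EE_col[OF t(2)]])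
  finally show "(EE \<theta> ** EE \<eta>) *v w = (if \<theta> = \<eta> then EE \<theta> else 0) *v w" by auto
qed

lemma EE_sum: "(\<Sum>\<theta>\<in>EVs. EE \<theta>) = mat 1"
  unfolding EE_def using mpoly_sum[of EVs AM Lg] sum_Lg by simp

lemma EE_sym: "transpose (EE \<theta>) = EE \<theta>"
  unfolding EE_def by (rule mpoly_transpose[OF AM_sym])

lemma eigenspace_iff: "v \<in> eigenspace adj \<theta> \<longleftrightarrow> AM *v v = \<theta> *\<^sub>R v"
  by (simp add: eigenspace_def scalar_mult_eq_scaleR)

lemma EE_range: "\<theta> \<in> EVs \<Longrightarrow> range (\<lambda>x. EE \<theta> *v x) = eigenspace adj \<theta>"
proof safe
  fix x assume "\<theta> \<in> EVs"
  then show "EE \<theta> *v x \<in> eigenspace adj \<theta>" using EE_col eigenspace_iff by auto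
next
  fix v assume t: "\<theta> \<in> EVs" and "v \<in> eigenspace adj \<theta>"
  then have "EE \<theta> *v v = v" using EE_eig[OF t t] eigenspace_iff by auto
  then show "v \<in> range (\<lambda>x. EE \<theta> *v x)" by (metis rangeI)
qed

lemma EE_nz: "\<theta> \<in> EVs \<Longrightarrow> EE \<theta> \<noteq> 0"
proof
  assume t: "\<theta> \<in> EVs" and z: "EE \<theta> = 0"
  obtain v where "v \<noteq> 0" "AM *v v = \<theta> *\<^sub>R v" using eigvec[OF t] by auto
  then show False using EE_eig[OF t t, of v] z by simp
qed

lemma eig_proj_EE: "\<theta> \<in> EVs \<Longrightarrow> eig_proj adj \<theta> = EE \<theta>"
  unfolding eig_proj_def
proof (rule the_equality)
  assume t: "\<theta> \<in> EVs"
  show "transpose (EE \<theta>) = EE \<theta> \<and> EE \<theta> ** EE \<theta> = EE \<theta> \<and> range (\<lambda>x. EE \<theta> *v x) = eigenspace adj \<theta>"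
    using EE_sym EE_mult[OF t t] EE_range[OF t] by simp
  fix P assume "transpose P = P \<and> P ** P = P \<and> range (\<lambda>x. P *v x) = eigenspace adj \<theta>"
  then show "P = EE \<theta>"
    using proj_unique[of P "EE \<theta>"] EE_sym EE_mult[OF t t] EE_range[OF t] by simp
qed

lemma EE_BM: "EE \<theta> \<in> BM" unfolding EE_def by (rule mpoly_BM)

end


lemma sum_matrix_mult: "finite S \<Longrightarrow> (\<Sum>i\<in>S. f i) ** (B::real^'n^'n) = (\<Sum>i\<in>S. f i ** B)"
  by (induction S rule: finite_induct) (auto simp: matrix_add_rdistrib')

context drgE begin

lemma sum_mult_EE: "\<eta> \<in> EVs \<Longrightarrow> (\<Sum>\<theta>\<in>EVs. c \<theta> *\<^sub>R EE \<theta>) ** EE \<eta> = c \<eta> *\<^sub>R EE \<eta>"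
proof -
  assume e: "\<eta> \<in> EVs"
  have "(\<Sum>\<theta>\<in>EVs. c \<theta> *\<^sub>R EE \<theta>) ** EE \<eta> = (\<Sum>\<theta>\<in>EVs. c \<theta> *\<^sub>R (EE \<theta> ** EE \<eta>))"
    by (simp add: sum_matrix_mult scalar_matrix_assoc)
  also have "\<dots> = (\<Sum>\<theta>\<in>EVs. if \<theta> = \<eta> then c \<eta> *\<^sub>R EE \<eta> else 0)"
    by (intro sum.cong refl) (simp add: EE_mult e)
  also have "\<dots> = c \<eta> *\<^sub>R EE \<eta>" using e by simp
  finally show ?thesis .
qed

lemma inj_EE: "inj_on EE EVs"
proof (rule inj_onI)
  fix \<theta> \<eta> assume t: "\<theta> \<in> EVs" "\<eta> \<in> EVs" "EE \<theta> = EE \<eta>"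
  show "\<theta> = \<eta>"
  proof (rule ccontr)
    assume "\<theta> \<noteq> \<eta>"
    then have "EE \<theta> ** EE \<eta> = 0" using EE_mult[of \<theta> \<eta>] t by simp
    moreover have "EE \<theta> ** EE \<eta> = EE \<theta>" using EE_mult[of \<theta> \<theta>] t by simp
    ultimately show False using EE_nz t by simp
  qed
qed

lemma coeff_unique:
  assumes "(\<Sum>\<theta>\<in>EVs. c \<theta> *\<^sub>R EE \<theta>) = (\<Sum>\<theta>\<in>EVs. d \<theta> *\<^sub>R EE \<theta>)" "\<eta> \<in> EVs"
  shows "c \<eta> = d \<eta>"
proof -
  have "c \<eta> *\<^sub>R EE \<eta> = d \<eta> *\<^sub>R EE \<eta>" using sum_mult_EE[OF assms(2), of c] sum_mult_EE[OF assms(2), of d] assms(1) by metis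
  then have "(c \<eta> - d \<eta>) *\<^sub>R EE \<eta> = 0" by (simp add: algebra_simps)
  then show ?thesis using EE_nz[OF assms(2)] by simp
qed

lemma indep_EE: "independent (EE ` EVs)"
proof
  assume "dependent (EE ` EVs)"
  then obtain u where u: "\<exists>v\<in>EE ` EVs. u v \<noteq> 0" "(\<Sum>v\<in>EE ` EVs. u v *\<^sub>R v) = 0"
    using dependent_finite[of "EE ` EVs"] by auto
  have "(\<Sum>\<theta>\<in>EVs. u (EE \<theta>) *\<^sub>R EE \<theta>) = (\<Sum>\<theta>\<in>EVs. 0 *\<^sub>R EE \<theta>)"
    using u(2) sum.reindex[OF inj_EE, of "\<lambda>v. u v *\<^sub>R v"] by simp
  then have "u (EE \<theta>) = 0" if "\<theta> \<in> EVs" for \<theta>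
    using coeff_unique[of "\<lambda>\<theta>. u (EE \<theta>)" "\<lambda>_. 0" \<theta>] that by simp
  then show False using u(1) by auto
qed

lemma BM_in_span: "M \<in> BM \<Longrightarrow> \<exists>c. M = (\<Sum>\<theta>\<in>EVs. c \<theta> *\<^sub>R EE \<theta>)"
proof -
  assume M: "M \<in> BM"
  have "BM \<subseteq> span (EE ` EVs)"
  proof (rule card_ge_dim_independent)
    show "EE ` EVs \<subseteq> BM" using EE_BM by auto
    show "independent (EE ` EVs)" by (rule indep_EE)
    show "dim BM \<le> card (EE ` EVs)" using dim_BM card_image[OF inj_EE] card_EV by simp
  qed
  with M obtain u where "M = (\<Sum>v\<in>EE ` EVs. u v *\<^sub>R v)"
    using span_finite[of "EE ` EVs"] by auto
  then have "M = (\<Sum>\<theta>\<in>EVs. u (EE \<theta>) *\<^sub>R EE \<theta>)"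
    using sum.reindex[OF inj_EE, of "\<lambda>v. u v *\<^sub>R v"] by simp
  then show ?thesis by (intro exI[of _ "\<lambda>\<theta>. u (EE \<theta>)"])
qed


lemma krein_char:
  assumes i: "\<theta>i \<in> EVs" and j: "\<theta>j \<in> EVs"
  shows "hadamard (EE \<theta>i) (EE \<theta>j) = (\<Sum>\<theta>\<in>EVs. (krein adj \<theta>i \<theta>j \<theta> / real CARD('a)) *\<^sub>R EE \<theta>)"
    and "\<theta> \<notin> EVs \<Longrightarrow> krein adj \<theta>i \<theta>j \<theta> = 0"
proof -
  have "hadamard (EE \<theta>i) (EE \<theta>j) \<in> BM" using hadamard_BM EE_BM by simp
  then obtain c where c: "hadamard (EE \<theta>i) (EE \<theta>j) = (\<Sum>\<theta>\<in>EVs. c \<theta> *\<^sub>R EE \<theta>)"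
    using BM_in_span by blast
  define q where "q \<theta> = (if \<theta> \<in> EVs then real CARD('a) * c \<theta> else 0)" for \<theta>
  have npos: "real CARD('a) > 0" by simp
  have sumeq: "(1 / real CARD('a)) *\<^sub>R (\<Sum>\<theta>\<in>EVs. q \<theta> *\<^sub>R eig_proj adj \<theta>) = (\<Sum>\<theta>\<in>EVs. (q \<theta> / real CARD('a)) *\<^sub>R EE \<theta>)" for q
    by (simp add: scaleR_sum_right eig_proj_EE)
  have kq: "krein adj \<theta>i \<theta>j = q"
    unfolding krein_def
  proof (rule the_equality)
    show "(\<forall>\<theta>. \<theta> \<notin> EVs \<longrightarrow> q \<theta> = 0) \<and>
      hadamard (eig_proj adj \<theta>i) (eig_proj adj \<theta>j) = (1 / real CARD('a)) *\<^sub>R (\<Sum>\<theta>\<in>EVs. q \<theta> *\<^sub>R eig_proj adj \<theta>)"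
      unfolding sumeq using c i j npos by (simp add: eig_proj_EE q_def)
    fix q' assume q': "(\<forall>\<theta>. \<theta> \<notin> EVs \<longrightarrow> q' \<theta> = 0) \<and>
      hadamard (eig_proj adj \<theta>i) (eig_proj adj \<theta>j) = (1 / real CARD('a)) *\<^sub>R (\<Sum>\<theta>\<in>EVs. q' \<theta> *\<^sub>R eig_proj adj \<theta>)"
    show "q' = q"
    proof
      fix \<eta> show "q' \<eta> = q \<eta>"
      proof (cases "\<eta> \<in> EVs")
        case True
        have "(\<Sum>\<theta>\<in>EVs. (q' \<theta> / real CARD('a)) *\<^sub>R EE \<theta>) = (\<Sum>\<theta>\<in>EVs. c \<theta> *\<^sub>R EE \<theta>)"
          using q' c i j unfolding sumeq by (simp add: eig_proj_EE)
        then have "q' \<eta> / real CARD('a) = c \<eta>" using coeff_unique[of "\<lambda>\<theta>. q' \<theta> / real CARD('a)" c \<eta>] True by simp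
        then show ?thesis using True npos by (simp add: q_def field_simps)
      qed (use q' q_def in auto)
    qed
  qed
  show "hadamard (EE \<theta>i) (EE \<theta>j) = (\<Sum>\<theta>\<in>EVs. (krein adj \<theta>i \<theta>j \<theta> / real CARD('a)) *\<^sub>R EE \<theta>)"
    unfolding kq c using npos by (intro sum.cong refl) (simp add: q_def)
  show "\<theta> \<notin> EVs \<Longrightarrow> krein adj \<theta>i \<theta>j \<theta> = 0" unfolding kq q_def by simp
qed

lemma krein_mult:
  assumes "\<theta>i \<in> EVs" "\<theta>j \<in> EVs" "\<eta> \<in> EVs"
  shows "hadamard (EE \<theta>i) (EE \<theta>j) ** EE \<eta> = (krein adj \<theta>i \<theta>j \<eta> / real CARD('a)) *\<^sub>R EE \<eta>"
  using krein_char(1)[OF assms(1,2)] sum_mult_EE[OF assms(3)] by simp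

end


context drgE begin

definition jv :: "real^'a" where "jv = (\<chi> x. 1)"
definition Jm :: "real^'a^'a" where "Jm = (\<chi> x y. 1)"

lemma AM_jv: "AM *v jv = real (bb 0) *\<^sub>R jv"
proof -
  have "(\<Sum>z\<in>UNIV. (if adj x z then 1 else 0) * 1) = real (bb 0)" for x :: 'a
  proof -
    have "(\<Sum>z\<in>UNIV. (if adj x z then 1 else 0) * (1::real)) = (\<Sum>z\<in>UNIV. if adj x z then 1 else 0)" by simp
    also have "\<dots> = real (card {z. adj x z})" by (simp add: sum.If_cases)
    finally show ?thesis using degree[of x] by simp
  qed
  then show ?thesis by (simp add: matrix_vector_mult_def adj_matrix_def jv_def vec_eq_iff)
qed

lemma jv_nz: "jv \<noteq> 0" by (simp add: jv_def vec_eq_iff)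

lemma ev_bound:
  assumes "v \<noteq> 0" "AM *v v = \<theta> *\<^sub>R v"
  shows "\<theta> \<le> real (bb 0)"
proof -
  let ?R = "range (\<lambda>y. \<bar>v $ y\<bar>)"
  have "Max ?R \<in> ?R" by (rule Max_in) auto
  then obtain x where x0: "Max ?R = \<bar>v $ x\<bar>" by (rule imageE)
  note x = x0[symmetric]
  have mx: "\<bar>v $ y\<bar> \<le> \<bar>v $ x\<bar>" for y unfolding x by (rule Max_ge) auto
  have "\<exists>y. v $ y \<noteq> 0" using assms(1) by (auto simp: vec_eq_iff)
  then have pos: "\<bar>v $ x\<bar> > 0" using mx by (meson abs_ge_zero abs_le_zero_iff le_less_trans not_le)
  have "\<theta> * v $ x = (\<Sum>z\<in>UNIV. (if adj x z then 1 else 0) * v $ z)"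
    using arg_cong[OF assms(2), of "\<lambda>w. w $ x"] by (simp add: matrix_vector_mult_def adj_matrix_def)
  also have "\<dots> = (\<Sum>z\<in>UNIV. if adj x z then v $ z else 0)" by (intro sum.cong) auto
  also have "\<dots> = (\<Sum>z\<in>{z. adj x z}. v $ z)" by (simp add: sum.If_cases)
  finally have "\<bar>\<theta>\<bar> * \<bar>v $ x\<bar> = \<bar>\<Sum>z\<in>{z. adj x z}. v $ z\<bar>" by (metis abs_mult)
  also have "\<dots> \<le> (\<Sum>z\<in>{z. adj x z}. \<bar>v $ z\<bar>)" by (rule sum_abs)
  also have "\<dots> \<le> (\<Sum>z\<in>{z. adj x z}. \<bar>v $ x\<bar>)" by (intro sum_mono mx)
  also have "\<dots> = real (bb 0) * \<bar>v $ x\<bar>" using degree[of x] by simp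
  finally have "\<bar>\<theta>\<bar> \<le> real (bb 0)" using pos by simp
  then show ?thesis by simp
qed

lemma k_deg: "k = real (bb 0)"
proof -
  have "real (bb 0) \<in> EVs" unfolding graph_eigenvalues_def
    using AM_jv jv_nz by (auto simp: scalar_mult_eq_scaleR)
  moreover have "k \<in> EVs" using EV by simp
  then have "k \<le> real (bb 0)" using eigvec ev_bound by blast
  moreover have "\<theta> \<le> k" if "\<theta> \<in> EVs" for \<theta> using that EV o1 o2 o3 by auto
  ultimately show ?thesis by force
qed

lemma k_EV: "k \<in> EVs" using EV by simp
lemma t1_EV: "t1 \<in> EVs" using EV by simp
lemma t2_EV: "t2 \<in> EVs" using EV by simp
lemma t3_EV: "t3 \<in> EVs" using EV by simp

lemma Max_EV: "Max EVs = k"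
  using EV o1 o2 o3 by (simp add: max_def)

lemma Jm_BM: "Jm \<in> BM" unfolding BM_def Bf_def Jm_def by (rule range_eqI[of _ _ "\<lambda>_. 1"]) simp

lemma Jm_E: "\<theta> \<in> EVs \<Longrightarrow> Jm ** EE \<theta> = (\<chi> x y. (EE \<theta> *v jv) $ y)"
proof -
  assume "\<theta> \<in> EVs"
  have "(Jm ** EE \<theta>) $ x $ y = (EE \<theta> *v jv) $ y" for x y
  proof -
    have "(Jm ** EE \<theta>) $ x $ y = (\<Sum>z\<in>UNIV. EE \<theta> $ z $ y)" by (simp add: matrix_matrix_mult_def Jm_def)
    also have "\<dots> = (\<Sum>z\<in>UNIV. EE \<theta> $ y $ z)"
      using arg_cong[OF EE_sym[of \<theta>], of "\<lambda>M. M $ y"] by (simp add: transpose_def vec_eq_iff)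
    finally show ?thesis by (simp add: matrix_vector_mult_def jv_def)
  qed
  then show ?thesis by (simp add: vec_eq_iff)
qed

lemma Ek: "EE k = (1 / real CARD('a)) *\<^sub>R Jm"
proof -
  obtain c where c: "Jm = (\<Sum>\<theta>\<in>EVs. c \<theta> *\<^sub>R EE \<theta>)" using BM_in_span[OF Jm_BM] by blast
  have jk: "EE \<theta> *v jv = (if k = \<theta> then jv else 0)" if "\<theta> \<in> EVs" for \<theta>
    using EE_eig[OF that k_EV] AM_jv k_deg by simp
  have c0: "c \<theta> = 0" if "\<theta> \<in> EVs" "\<theta> \<noteq> k" for \<theta>
  proof -
    have "Jm ** EE \<theta> = 0" using Jm_E[OF that(1)] jk[OF that(1)] that by (simp add: vec_eq_iff)
    then have "c \<theta> *\<^sub>R EE \<theta> = 0" using sum_mult_EE[OF that(1), of c] c by simp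
    then show ?thesis using EE_nz[OF that(1)] by simp
  qed
  have "Jm = (\<Sum>\<theta>\<in>EVs. if \<theta> = k then c k *\<^sub>R EE k else 0)"
    unfolding c by (intro sum.cong refl) (auto simp: c0)
  then have Jc: "Jm = c k *\<^sub>R EE k" using k_EV by simp
  have "Jm *v jv = real CARD('a) *\<^sub>R jv" by (simp add: Jm_def jv_def matrix_vector_mult_def vec_eq_iff)
  moreover have "Jm *v jv = c k *\<^sub>R jv"
  proof -
    have "Jm *v jv = (c k *\<^sub>R EE k) *v jv" using Jc by simp
    also have "\<dots> = c k *\<^sub>R (EE k *v jv)" by (rule scaleR_mat_vec)
    finally show ?thesis using jk[OF k_EV] by simp
  qed
  ultimately have "c k = real CARD('a)" using jv_nz by (metis scaleR_cancel_right)
  then have "Jm = real CARD('a) *\<^sub>R EE k" using Jc by simp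
  then have "(1 / real CARD('a)) *\<^sub>R Jm = (1 / real CARD('a)) *\<^sub>R (real CARD('a) *\<^sub>R EE k)" by (rule arg_cong)
  also have "\<dots> = EE k" by simp
  finally show ?thesis by simp
qed

definition tr :: "real^'a^'a \<Rightarrow> real" where "tr M = (\<Sum>x\<in>UNIV. M $ x $ x)"

lemma EE_diag: "EE \<theta> $ x $ x = (\<Sum>z\<in>UNIV. (EE \<theta> $ x $ z)\<^sup>2)" if "\<theta> \<in> EVs"
proof -
  have "EE \<theta> $ x $ x = (EE \<theta> ** EE \<theta>) $ x $ x" using EE_mult[OF that that] by simp
  also have "\<dots> = (\<Sum>z\<in>UNIV. EE \<theta> $ x $ z * EE \<theta> $ z $ x)" by (simp add: matrix_matrix_mult_def)
  also have "\<dots> = (\<Sum>z\<in>UNIV. (EE \<theta> $ x $ z)\<^sup>2)"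
  proof (intro sum.cong refl)
    fix z have "EE \<theta> $ z $ x = EE \<theta> $ x $ z"
      using arg_cong[OF EE_sym[of \<theta>], of "\<lambda>M. M $ x $ z"] by (simp add: transpose_def)
    then show "EE \<theta> $ x $ z * EE \<theta> $ z $ x = (EE \<theta> $ x $ z)\<^sup>2" by (simp add: power2_eq_square)
  qed
  finally show ?thesis .
qed

lemma tr_pos: "\<theta> \<in> EVs \<Longrightarrow> tr (EE \<theta>) > 0"
proof -
  assume t: "\<theta> \<in> EVs"
  obtain x z where xz: "EE \<theta> $ x $ z \<noteq> 0" using EE_nz[OF t] by (auto simp: vec_eq_iff)
  have "0 < (EE \<theta> $ x $ z)\<^sup>2" using xz by simp
  also have "\<dots> \<le> (\<Sum>z\<in>UNIV. (EE \<theta> $ x $ z)\<^sup>2)" by (rule member_le_sum) auto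
  also have "\<dots> = EE \<theta> $ x $ x" using EE_diag[OF t] by simp
  also have "\<dots> \<le> tr (EE \<theta>)" unfolding tr_def
    by (rule member_le_sum) (auto simp: EE_diag[OF t] intro: sum_nonneg)
  finally show ?thesis .
qed

lemma krein_t1_k: "\<eta> \<noteq> t1 \<Longrightarrow> krein adj t1 k \<eta> = 0"
proof (cases "\<eta> \<in> EVs")
  case False then show ?thesis using krein_char(2)[OF t1_EV k_EV] by simp
next
  case True
  assume ne: "\<eta> \<noteq> t1"
  have "hadamard (EE t1) (EE k) = (1 / real CARD('a)) *\<^sub>R EE t1"
    by (simp add: Ek hadamard_def Jm_def vec_eq_iff)
  then have "(1 / real CARD('a)) *\<^sub>R (EE t1 ** EE \<eta>) = (krein adj t1 k \<eta> / real CARD('a)) *\<^sub>R EE \<eta>"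
    using krein_mult[OF t1_EV k_EV True] by (simp add: scalar_matrix_assoc)
  then have "(krein adj t1 k \<eta> / real CARD('a)) *\<^sub>R EE \<eta> = 0" using EE_mult[OF t1_EV True] ne by simp
  then show ?thesis using EE_nz[OF True] by simp
qed

lemma had_J: "hadamard (EE t1) (EE \<theta>) ** Jm = (\<chi> x y. (EE t1 ** EE \<theta>) $ x $ x)" if "\<theta> \<in> EVs"
proof -
  have "(hadamard (EE t1) (EE \<theta>) ** Jm) $ x $ y = (EE t1 ** EE \<theta>) $ x $ x" for x y
  proof -
    have "(hadamard (EE t1) (EE \<theta>) ** Jm) $ x $ y = (\<Sum>z\<in>UNIV. EE t1 $ x $ z * EE \<theta> $ x $ z)"
      by (simp add: matrix_matrix_mult_def Jm_def hadamard_def)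
    also have "\<dots> = (\<Sum>z\<in>UNIV. EE t1 $ x $ z * EE \<theta> $ z $ x)"
    proof (intro sum.cong refl)
      fix z have "EE \<theta> $ z $ x = EE \<theta> $ x $ z"
        using arg_cong[OF EE_sym[of \<theta>], of "\<lambda>M. M $ x $ z"] by (simp add: transpose_def)
      then show "EE t1 $ x $ z * EE \<theta> $ x $ z = EE t1 $ x $ z * EE \<theta> $ z $ x" by simp
    qed
    finally show ?thesis by (simp add: matrix_matrix_mult_def)
  qed
  then show ?thesis by (simp add: vec_eq_iff)
qed

lemma krein_t1_x_k: "\<theta> \<in> EVs \<Longrightarrow> \<theta> \<noteq> t1 \<Longrightarrow> krein adj t1 \<theta> k = 0"
proof -
  assume t: "\<theta> \<in> EVs" "\<theta> \<noteq> t1"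
  have "hadamard (EE t1) (EE \<theta>) ** Jm = 0" using had_J[OF t(1)] EE_mult[OF t1_EV t(1)] t by (simp add: vec_eq_iff)
  then have "hadamard (EE t1) (EE \<theta>) ** EE k = 0" by (simp add: Ek matrix_scalar_ac scalar_matrix_assoc[symmetric])
  then have "(krein adj t1 \<theta> k / real CARD('a)) *\<^sub>R EE k = 0" using krein_mult[OF t1_EV t(1) k_EV] by simp
  then show ?thesis using EE_nz[OF k_EV] by simp
qed

lemma krein_t1_t1_k: "krein adj t1 t1 k \<noteq> 0"
proof
  assume z: "krein adj t1 t1 k = 0"
  have "hadamard (EE t1) (EE t1) ** EE k = 0" using krein_mult[OF t1_EV t1_EV k_EV] z by simp
  then have "hadamard (EE t1) (EE t1) ** Jm = 0" using Ek by (simp add: matrix_scalar_ac scalar_matrix_assoc[symmetric])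
  then have "(EE t1 ** EE t1) $ x $ x = 0" for x using had_J[OF t1_EV] by (simp add: vec_eq_iff)
  then have "EE t1 $ x $ x = 0" for x using EE_mult[OF t1_EV t1_EV] by simp
  then have "tr (EE t1) = 0" by (simp add: tr_def)
  then show False using tr_pos[OF t1_EV] by simp
qed

definition T3 :: "real \<Rightarrow> real \<Rightarrow> real \<Rightarrow> real" where
  "T3 a b c = (\<Sum>x\<in>UNIV. \<Sum>y\<in>UNIV. EE a $ x $ y * EE b $ x $ y * EE c $ x $ y)"

lemma T3_krein: "a \<in> EVs \<Longrightarrow> b \<in> EVs \<Longrightarrow> c \<in> EVs \<Longrightarrow> T3 a b c = (krein adj a b c / real CARD('a)) * tr (EE c)"
proof -
  assume t: "a \<in> EVs" "b \<in> EVs" "c \<in> EVs"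
  have "tr (hadamard (EE a) (EE b) ** EE c) = T3 a b c"
    unfolding tr_def T3_def
  proof (intro sum.cong refl)
    fix x
    show "(hadamard (EE a) (EE b) ** EE c) $ x $ x = (\<Sum>y\<in>UNIV. EE a $ x $ y * EE b $ x $ y * EE c $ x $ y)"
      unfolding matrix_matrix_mult_def hadamard_def
    proof (simp, intro sum.cong refl)
      fix y have "EE c $ y $ x = EE c $ x $ y"
        using arg_cong[OF EE_sym[of c], of "\<lambda>M. M $ x $ y"] by (simp add: transpose_def)
      then show "EE a $ x $ y * EE b $ x $ y * EE c $ y $ x = EE a $ x $ y * EE b $ x $ y * EE c $ x $ y" by simp
    qed
  qed
  moreover have "tr (hadamard (EE a) (EE b) ** EE c) = (krein adj a b c / real CARD('a)) * tr (EE c)"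
    using krein_mult[OF t] by (simp add: tr_def sum_distrib_left)
  ultimately show ?thesis by simp
qed

lemma T3_swap: "T3 a b c = T3 a c b" unfolding T3_def by (simp add: mult_ac)

lemma krein_sym0:
  assumes "\<eta> \<in> EVs" "krein adj t1 t1 \<eta> = 0"
  shows "krein adj t1 \<eta> t1 = 0"
proof -
  have "T3 t1 t1 \<eta> = 0" using T3_krein[OF t1_EV t1_EV assms(1)] assms(2) by simp
  then have "T3 t1 \<eta> t1 = 0" by (simp add: T3_swap)
  then have "(krein adj t1 \<eta> t1 / real CARD('a)) * tr (EE t1) = 0" using T3_krein[OF t1_EV assms(1) t1_EV] by simp
  then show ?thesis using tr_pos[OF t1_EV] by simp
qed

end


lemma card_tri: "2 * card {(i::nat, j). i \<le> j \<and> j < m} = m * (m + 1)"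
proof (induction m)
  case 0 then show ?case by simp
next
  case (Suc m)
  have eq: "{(i::nat, j). i \<le> j \<and> j < Suc m} = {(i, j). i \<le> j \<and> j < m} \<union> (\<lambda>i. (i, m)) ` {..m}"
    by auto
  have fin: "finite {(i::nat, j). i \<le> j \<and> j < m}"
    by (rule finite_subset[of _ "{..<m} \<times> {..<m}"]) auto
  have "card {(i::nat, j). i \<le> j \<and> j < Suc m} = card {(i, j). i \<le> j \<and> j < m} + card ((\<lambda>i. (i, m)) ` {..m})"
    unfolding eq by (rule card_Un_disjoint) (use fin in auto)
  also have "card ((\<lambda>i. (i, m)) ` {..m}) = Suc m" by (subst card_image) (auto simp: inj_on_def)
  finally show ?case using Suc by simp
qed

lemma sum_mat_vec: "finite S \<Longrightarrow> (\<Sum>i\<in>S. f i) *v (w::real^'n) = (\<Sum>i\<in>S. f i *v w)"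
  by (induction S rule: finite_induct) (auto simp: matrix_vector_mult_add_rdistrib)

context drgE begin

lemma subspace_eig: "subspace (eigenspace adj \<theta>)"
  unfolding subspace_def eigenspace_def
  by (simp add: matrix_vector_right_distrib matrix_vector_mult_scaleR scalar_mult_eq_scaleR algebra_simps)

definition outer :: "real^'a \<Rightarrow> real^'a \<Rightarrow> real^'a^'a" where
  "outer b c = (\<chi> x y. b $ x * c $ y)"

lemma outer_mv: "outer b b *v w = (b \<bullet> w) *\<^sub>R b"
  by (simp add: outer_def matrix_vector_mult_def inner_vec_def vec_eq_iff sum_distrib_left mult_ac)

lemma proj_basis:
  fixes B :: "(real^'a) set"
  assumes fin: "finite B" and orth: "pairwise orthogonal B" and nrm: "\<And>x. x \<in> B \<Longrightarrow> norm x = 1"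
  defines "Pm \<equiv> (\<Sum>b\<in>B. outer b b)"
  shows "transpose Pm = Pm" "Pm ** Pm = Pm" "range (\<lambda>x. Pm *v x) = span B"
proof -
  have mv: "Pm *v w = (\<Sum>b\<in>B. (b \<bullet> w) *\<^sub>R b)" for w
    unfolding Pm_def using fin by (simp add: sum_mat_vec outer_mv)
  have fixb: "Pm *v c = c" if "c \<in> B" for c
  proof -
    have "(\<Sum>b\<in>B. (b \<bullet> c) *\<^sub>R b) = (\<Sum>b\<in>B. if b = c then c else 0)"
    proof (intro sum.cong refl)
      fix b assume b: "b \<in> B"
      show "(b \<bullet> c) *\<^sub>R b = (if b = c then c else 0)"
      proof (cases "b = c")
        case True
        then have "b \<bullet> c = 1" using nrm[OF b] by (metis norm_eq_1)
        then show ?thesis using True by simp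
      next
        case False
        then have "b \<bullet> c = 0" using orth b that unfolding pairwise_def orthogonal_def by blast
        then show ?thesis using False by simp
      qed
    qed
    also have "\<dots> = c" using that fin by simp
    finally show ?thesis using mv by simp
  qed
  have fixspan: "Pm *v u = u" if "u \<in> span B" for u
  proof -
    have "subspace {u. Pm *v u = u}"
      by (simp add: subspace_def matrix_vector_right_distrib matrix_vector_mult_scaleR)
    moreover have "B \<subseteq> {u. Pm *v u = u}" using fixb by auto
    ultimately show ?thesis using that span_minimal by blast
  qed
  have inspan: "Pm *v w \<in> span B" for w
    unfolding mv by (intro span_sum span_scale span_base) auto
  show "transpose Pm = Pm" unfolding Pm_def
    by (simp add: transpose_def outer_def vec_eq_iff mult.commute)
  show "Pm ** Pm = Pm"
    by (rule matrix_eq[THEN iffD2]) (simp add: matrix_vector_mul_assoc[symmetric] fixspan[OF inspan])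
  show "range (\<lambda>x. Pm *v x) = span B"
  proof
    show "range (\<lambda>x. Pm *v x) \<subseteq> span B" using inspan by auto
    show "span B \<subseteq> range (\<lambda>x. Pm *v x)"
    proof
      fix u assume "u \<in> span B"
      then have "u = Pm *v u" using fixspan by simp
      then show "u \<in> range (\<lambda>x. Pm *v x)" by (rule range_eqI)
    qed
  qed
qed

lemma had_outer: "hadamard (\<Sum>b\<in>B. outer b b) (\<Sum>b\<in>B. outer b b) *v w =
   (\<Sum>b\<in>B. \<Sum>c\<in>B. ((b * c) \<bullet> w) *\<^sub>R (b * c))"
proof -
  have "(hadamard (\<Sum>b\<in>B. outer b b) (\<Sum>b\<in>B. outer b b) *v w) $ x =
        (\<Sum>b\<in>B. \<Sum>c\<in>B. ((b * c) \<bullet> w) * (b * c) $ x)" for x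
  proof -
    have "(hadamard (\<Sum>b\<in>B. outer b b) (\<Sum>b\<in>B. outer b b) *v w) $ x =
      (\<Sum>y\<in>UNIV. (\<Sum>b\<in>B. b $ x * b $ y) * (\<Sum>c\<in>B. c $ x * c $ y) * w $ y)"
      by (simp add: hadamard_def matrix_vector_mult_def outer_def)
    also have "\<dots> = (\<Sum>y\<in>UNIV. \<Sum>b\<in>B. \<Sum>c\<in>B. (b $ x * c $ x) * (b $ y * c $ y * w $ y))"
    proof (rule sum.cong[OF refl])
      fix y
      have "(\<Sum>b\<in>B. b $ x * b $ y) * (\<Sum>c\<in>B. c $ x * c $ y) * w $ y =
          (\<Sum>b\<in>B. (b $ x * b $ y) * (\<Sum>c\<in>B. c $ x * c $ y) * w $ y)"
        by (simp add: sum_distrib_right)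
      also have "\<dots> = (\<Sum>b\<in>B. \<Sum>c\<in>B. (b $ x * b $ y) * (c $ x * c $ y) * w $ y)"
        by (rule sum.cong[OF refl]) (simp add: sum_distrib_left sum_distrib_right)
      also have "\<dots> = (\<Sum>b\<in>B. \<Sum>c\<in>B. (b $ x * c $ x) * (b $ y * c $ y * w $ y))"
        by (intro sum.cong refl) (simp only: mult_ac)
      finally show "(\<Sum>b\<in>B. b $ x * b $ y) * (\<Sum>c\<in>B. c $ x * c $ y) * w $ y =
          (\<Sum>b\<in>B. \<Sum>c\<in>B. (b $ x * c $ x) * (b $ y * c $ y * w $ y))" .
    qed
    also have "\<dots> = (\<Sum>b\<in>B. \<Sum>y\<in>UNIV. \<Sum>c\<in>B. (b $ x * c $ x) * (b $ y * c $ y * w $ y))"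
      by (rule sum.swap)
    also have "\<dots> = (\<Sum>b\<in>B. \<Sum>c\<in>B. \<Sum>y\<in>UNIV. (b $ x * c $ x) * (b $ y * c $ y * w $ y))"
      by (rule sum.cong[OF refl], rule sum.swap)
    also have "\<dots> = (\<Sum>b\<in>B. \<Sum>c\<in>B. ((b * c) \<bullet> w) * (b * c) $ x)"
    proof (intro sum.cong refl)
      fix b c :: "real^'a"
      have "(b * c) \<bullet> w = (\<Sum>y\<in>UNIV. b $ y * c $ y * w $ y)"
        by (simp add: inner_vec_def times_vec_def)
      moreover have "(b * c) $ x = b $ x * c $ x" by (simp add: times_vec_def)
      ultimately show "(\<Sum>y\<in>UNIV. (b $ x * c $ x) * (b $ y * c $ y * w $ y)) = ((b * c) \<bullet> w) * (b * c) $ x"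
        by (simp add: sum_distrib_left sum_distrib_right mult.commute)
    qed
    finally show ?thesis .
  qed
  then show ?thesis by (simp add: vec_eq_iff)
qed

lemma card_G:
  assumes "finite B"
  shows "2 * card {b * c | b c. b \<in> B \<and> c \<in> (B::(real^'a) set)} \<le> card B * (card B + 1)"
proof -
  let ?m = "card B"
  obtain e where e: "bij_betw e {0..<?m} B" using ex_bij_betw_nat_finite[OF assms] by blast
  let ?I = "{(i::nat, j). i \<le> j \<and> j < ?m}"
  have finI: "finite ?I" by (rule finite_subset[of _ "{..<?m} \<times> {..<?m}"]) auto
  have sub: "{b * c | b c. b \<in> B \<and> c \<in> B} \<subseteq> (\<lambda>(i, j). e i * e j) ` ?I"
  proof
    fix v assume "v \<in> {b * c | b c. b \<in> B \<and> c \<in> B}"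
    then obtain b c where v: "v = b * c" "b \<in> B" "c \<in> B" by blast
    have "b \<in> e ` {0..<?m}" "c \<in> e ` {0..<?m}" using e v(2,3) by (simp_all add: bij_betw_def)
    then obtain i j where i: "i < ?m" "e i = b" and j: "j < ?m" "e j = c" by force
    show "v \<in> (\<lambda>(i, j). e i * e j) ` ?I"
    proof (cases "i \<le> j")
      case True then show ?thesis using i j v by (auto intro!: image_eqI[of _ _ "(i, j)"])
    next
      case False then show ?thesis using i j v by (auto intro!: image_eqI[of _ _ "(j, i)"] simp: mult.commute)
    qed
  qed
  have "card {b * c | b c. b \<in> B \<and> c \<in> B} \<le> card ((\<lambda>(i, j). e i * e j) ` ?I)"
    by (rule card_mono[OF _ sub]) (use finI in simp)
  also have "\<dots> \<le> card ?I" by (rule card_image_le[OF finI])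
  finally show ?thesis using card_tri[of ?m] by linarith
qed

lemma rank_bound:
  assumes q2: "krein adj t1 t1 t2 \<noteq> 0" and q3: "krein adj t1 t1 t3 \<noteq> 0"
  shows "2 * (CARD('a) - eig_mult adj t1) \<le> eig_mult adj t1 * (eig_mult adj t1 + 1)"
    and "eig_mult adj t1 \<le> CARD('a)"
proof -
  let ?S = "eigenspace adj t1"
  let ?m = "eig_mult adj t1"
  obtain B where B: "B \<subseteq> ?S" "pairwise orthogonal B" "\<And>x. x \<in> B \<Longrightarrow> norm x = 1"
    "independent B" "card B = dim ?S" "span B = ?S"
    using orthonormal_basis_subspace[OF subspace_eig] by metis
  have finB: "finite B" using B(4) by (rule independent_imp_finite)
  have cB: "card B = ?m" using B(5) by (simp add: eig_mult_def)
  let ?P = "\<Sum>b\<in>B. outer b b"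
  have "range (\<lambda>x. EE t1 *v x) = range (\<lambda>x. ?P *v x)"
    using EE_range[OF t1_EV] proj_basis(3)[OF finB B(2) B(3)] B(6) by simp
  then have E1: "EE t1 = ?P"
    using proj_unique[OF EE_sym EE_mult[OF t1_EV t1_EV, simplified] proj_basis(1,2)[OF finB B(2) B(3)]] by simp
  let ?G = "{b * c | b c. b \<in> B \<and> c \<in> B}"
  have finG: "finite ?G"
  proof -
    have "?G = (\<lambda>(b, c). b * c) ` (B \<times> B)" by auto
    then show ?thesis using finB by simp
  qed
  let ?H = "hadamard (EE t1) (EE t1)"
  have Hspan: "?H *v w \<in> span ?G" for w
    unfolding E1 had_outer by (intro span_sum span_scale span_base) auto
  let ?K = "{w. EE t1 *v w = 0}"
  have inH: "EE \<eta> *v u \<in> span ?G" if "\<eta> \<in> EVs" "krein adj t1 t1 \<eta> \<noteq> 0" for \<eta> u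
  proof -
    let ?q = "krein adj t1 t1 \<eta> / real CARD('a)"
    have q0: "?q \<noteq> 0" using that(2) by simp
    have "?H ** EE \<eta> = ?q *\<^sub>R EE \<eta>" by (rule krein_mult[OF t1_EV t1_EV that(1)])
    then have "EE \<eta> = (1 / ?q) *\<^sub>R (?H ** EE \<eta>)" using q0 by simp
    then have "EE \<eta> *v u = ((1 / ?q) *\<^sub>R (?H ** EE \<eta>)) *v u" by simp
    also have "\<dots> = ?H *v ((1 / ?q) *\<^sub>R (EE \<eta> *v u))"
      by (simp add: matrix_vector_mul_assoc[symmetric] matrix_vector_mult_scaleR)
    finally have eq: "EE \<eta> *v u = ?H *v ((1 / ?q) *\<^sub>R (EE \<eta> *v u))" .
    show ?thesis by (subst eq) (rule Hspan)
  qed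
  have Ksub: "?K \<subseteq> span ?G"
  proof
    fix w assume w: "w \<in> ?K"
    have "w = (\<Sum>\<theta>\<in>EVs. EE \<theta> *v w)" using EE_sum sum_mat_vec[of EVs EE w] by simp
    also have "\<dots> = EE k *v w + EE t1 *v w + EE t2 *v w + EE t3 *v w"
    proof -
      have nm: "k \<notin> {t1, t2, t3}" "t1 \<notin> {t2, t3}" "t2 \<notin> {t3}" using o1 o2 o3 by auto
      show ?thesis unfolding EV using nm by (simp add: add.assoc)
    qed
    also have "\<dots> = EE k *v w + EE t2 *v w + EE t3 *v w" using w by simp
    finally have "w = EE k *v w + EE t2 *v w + EE t3 *v w" .
    moreover have "EE k *v w + EE t2 *v w + EE t3 *v w \<in> span ?G"
      by (intro span_add inH[OF k_EV krein_t1_t1_k] inH[OF t2_EV q2] inH[OF t3_EV q3])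
    ultimately show "w \<in> span ?G" by simp
  qed
  have dK: "dim ?K \<le> card ?G" by (rule dim_le_card[OF Ksub finG])
  have subK: "subspace ?K"
    by (simp add: subspace_def matrix_vector_right_distrib matrix_vector_mult_scaleR)
  have sums: "{x + y |x y. x \<in> ?S \<and> y \<in> ?K} = UNIV"
  proof (rule set_eqI, rule iffI)
    fix w :: "real^'a"
    have "EE t1 *v w \<in> ?S" using EE_range[OF t1_EV] by auto
    moreover have "w - EE t1 *v w \<in> ?K"
      by (simp add: matrix_vector_mult_diff_distrib matrix_vector_mul_assoc EE_mult[OF t1_EV t1_EV])
    ultimately show "w \<in> {x + y |x y. x \<in> ?S \<and> y \<in> ?K}"
      by (intro CollectI exI[of _ "EE t1 *v w"] exI[of _ "w - EE t1 *v w"]) auto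
  qed simp
  have int: "?S \<inter> ?K = {0}"
  proof safe
    fix w assume "w \<in> ?S" "EE t1 *v w = 0"
    then show "w = 0" using EE_eig[OF t1_EV t1_EV, of w] eigenspace_iff by simp
  next
    show "0 \<in> ?S" using subspace_eig subspace_0 by blast
  qed simp
  have "dim (UNIV :: (real^'a) set) + dim ({0} :: (real^'a) set) = dim ?S + dim ?K"
    using dim_sums_Int[OF subspace_eig[of t1] subK] unfolding sums int .
  moreover have "dim (UNIV :: (real^'a) set) = CARD('a)" by simp
  moreover have "dim ({0} :: (real^'a) set) = 0" by (simp add: dim_insert)
  ultimately have nK: "CARD('a) = ?m + dim ?K" by (simp add: eig_mult_def)
  show "?m \<le> CARD('a)" using nK by simp
  have "2 * dim ?K \<le> 2 * card ?G" using dK by simp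
  also have "\<dots> \<le> ?m * (?m + 1)" using card_G[OF finB] cB by simp
  finally have "2 * dim ?K \<le> ?m * (?m + 1)" .
  then show "2 * (CARD('a) - ?m) \<le> ?m * (?m + 1)" using nK by simp
qed

end


context drgE begin

lemma krein_or:
  assumes nb: "real CARD('a) \<ge> real ((eig_mult adj t1 + 2) * (eig_mult adj t1 + 1)) / 2"
  shows "krein adj t1 t1 t2 = 0 \<or> krein adj t1 t1 t3 = 0"
proof (rule ccontr)
  assume "\<not> ?thesis"
  then have q: "krein adj t1 t1 t2 \<noteq> 0" "krein adj t1 t1 t3 \<noteq> 0" by auto
  let ?m = "eig_mult adj t1"
  have a: "2 * (CARD('a) - ?m) \<le> ?m * (?m + 1)" "?m \<le> CARD('a)" using rank_bound[OF q] by auto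
  have b: "(?m + 2) * (?m + 1) \<le> 2 * CARD('a)"
  proof -
    have "real ((?m + 2) * (?m + 1)) \<le> real (2 * CARD('a))" using nb by simp
    then show ?thesis by linarith
  qed
  from a b show False by (simp add: algebra_simps)
qed

lemma Qpoly_gen:
  assumes ab: "{a, b} = {t2, t3}" "a \<noteq> b" and z: "krein adj t1 t1 b = 0"
  shows "Q_polynomial_wrt adj t1"
proof -
  define \<sigma> where "\<sigma> i = (if i = 0 then k else if i = (1::nat) then t1 else if i = 2 then a else b)" for i
  have aEV: "a \<in> EVs" "b \<in> EVs" using ab EV by auto
  have ne: "a \<noteq> t1" "b \<noteq> t1" "a \<noteq> k" "b \<noteq> k" using ab o1 o2 o3 by (auto simp: doubleton_eq_iff)
  have img: "\<sigma> ` {0..3} = EVs"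
  proof -
    have "{0..3::nat} = {0,1,2,3}" by auto
    then have "\<sigma> ` {0..3} = {k, t1, a, b}" by (auto simp: \<sigma>_def)
    also have "\<dots> = EVs" using ab EV by auto
    finally show ?thesis .
  qed
  have bij: "bij_betw \<sigma> {0..graph_diameter adj} EVs"
    unfolding diam
  proof (rule bij_betw_imageI[OF _ img], rule eq_card_imp_inj_on)
    show "finite {0..3::nat}" by simp
    show "card (\<sigma> ` {0..3}) = card {0..3::nat}" using img card_EV by simp
  qed
  have kr: "krein adj (\<sigma> 1) (\<sigma> j) (\<sigma> h) = 0" if "j \<le> 3" "h \<le> 3" "1 < \<bar>int j - int h\<bar>" for j h
  proof -
    have j: "j = 0 \<or> j = 1 \<or> j = 2 \<or> j = 3" and h: "h = 0 \<or> h = 1 \<or> h = 2 \<or> h = 3" using that by auto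
    have k1: "krein adj t1 k \<eta> = 0" if "\<eta> \<noteq> t1" for \<eta> using krein_t1_k that by simp
    show ?thesis
      using j h that(3) k1 ne krein_t1_x_k[OF aEV(1)] krein_t1_x_k[OF aEV(2)] z krein_sym0[OF aEV(2) z]
      by (auto simp: \<sigma>_def)
  qed
  show ?thesis unfolding Q_polynomial_wrt_def
    using bij kr Max_EV diam by (intro exI[of _ \<sigma>]) (auto simp: \<sigma>_def)
qed

lemma main:
  assumes nb: "real CARD('a) \<ge> real ((eig_mult adj t1 + 2) * (eig_mult adj t1 + 1)) / 2"
  shows "(krein adj t1 t1 t2 = 0 \<or> krein adj t1 t1 t3 = 0) \<and> Q_polynomial_wrt adj t1"
proof -
  have d: "t2 \<noteq> t3" using o3 by simp
  have "Q_polynomial_wrt adj t1"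
  proof (cases "krein adj t1 t1 t3 = 0")
    case True then show ?thesis using Qpoly_gen[of t2 t3] d by auto
  next
    case False
    then have "krein adj t1 t1 t2 = 0" using krein_or[OF nb] by simp
    then show ?thesis using Qpoly_gen[of t3 t2] d by auto
  qed
  then show ?thesis using krein_or[OF nb] by simp
qed

end

theorem lemma13:
  fixes adj :: "'a::finite \<Rightarrow> 'a \<Rightarrow> bool"
    and k \<theta>1 \<theta>2 \<theta>3 :: real
  assumes "distance_regular adj"
    and "graph_diameter adj = 3"
    and "graph_eigenvalues adj = {k, \<theta>1, \<theta>2, \<theta>3}"
    and "k > \<theta>1" and "\<theta>1 > \<theta>2" and "\<theta>2 > \<theta>3"
    and "real CARD('a) \<ge> real ((eig_mult adj \<theta>1 + 2) * (eig_mult adj \<theta>1 + 1)) / 2"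
  shows "(krein adj \<theta>1 \<theta>1 \<theta>2 = 0 \<or> krein adj \<theta>1 \<theta>1 \<theta>3 = 0) \<and> Q_polynomial_wrt adj \<theta>1"
proof -
  interpret drgE adj k \<theta>1 \<theta>2 \<theta>3
    by unfold_locales (use assms in auto)
  show ?thesis using main assms(7) by simp
qed

end
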